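(* Let $\mathcal{L}$ be a complex filiform Lie algebra of dimension $n\ge3$ with a basis $\{e_1,\dots,e_n\}$ such that $[e_1,e_i]=e_{i+1}$ for all $2\le i\le n-1$ and $\{e_{k+2},\dots,e_n\}$ is a basis of $\mathcal{L}^k$ for $1\le k\le n-2$. Define the linear map $\Delta:\mathcal{L}\to\mathcal{L}$ by $\Delta(x)=x+x_3e_n$ for $x=\sum_{k=1}^n x_ke_k$. Then $\Delta$ is a local automorphism of $\mathcal{L}$ which is not an automorphism.
   Context: For a Lie algebra $\mathcal{L}$, $\mathcal{L}^0=\mathcal{L}$, $\mathcal{L}^k=[\mathcal{L}^{k-1},\mathcal{L}]$; an $n$-dimensional nilpotent Lie algebra is filiform if $\dim\mathcal{L}^k=n-k-1$ for $1\le k\le n-1$. (Other brackets among basis elements besides $[e_1,e_i]=e_{i+1}$ may be nonzero.) An automorphism is an invertible linear map $\Phi$ with $\Phi([x,y])=[\Phi(x),\Phi(y)]$ for all $x,y$; a linear map $\Delta$ is a local automorphism if for every $x\in\mathcal{L}$ there is an automorphism $\Phi_x$ with $\Phi_x(x)=\Delta(x)$. *)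

theory Defs
  imports Complex_Main
begin

definition lie_algebra :: "(complex \<Rightarrow> 'v::ab_group_add \<Rightarrow> 'v) \<Rightarrow> ('v \<Rightarrow> 'v \<Rightarrow> 'v) \<Rightarrow> bool" where
  "lie_algebra scale br \<longleftrightarrow>
     vector_space scale \<and>
     (\<forall>y. Vector_Spaces.linear scale scale (\<lambda>x. br x y)) \<and>
     (\<forall>x. Vector_Spaces.linear scale scale (br x)) \<and>
     (\<forall>x. br x x = 0) \<and>
     (\<forall>x y z. br x (br y z) + br y (br z x) + br z (br x y) = 0)"

fun lcs :: "(complex \<Rightarrow> 'v::ab_group_add \<Rightarrow> 'v) \<Rightarrow> ('v \<Rightarrow> 'v \<Rightarrow> 'v) \<Rightarrow> nat \<Rightarrow> 'v set" where
  "lcs scale br 0 = UNIV"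
| "lcs scale br (Suc k) = module.span scale {br x y | x y. x \<in> lcs scale br k}"

definition filiform :: "(complex \<Rightarrow> 'v::ab_group_add \<Rightarrow> 'v) \<Rightarrow> ('v \<Rightarrow> 'v \<Rightarrow> 'v) \<Rightarrow> nat \<Rightarrow> bool" where
  "filiform scale br n \<longleftrightarrow>
     lie_algebra scale br \<and>
     vector_space.dim scale (UNIV :: 'v set) = n \<and>
     (\<exists>k. lcs scale br k = {0}) \<and>
     (\<forall>k. 1 \<le> k \<and> k \<le> n - 1 \<longrightarrow> vector_space.dim scale (lcs scale br k) = n - k - 1)"

definition lie_automorphism :: "(complex \<Rightarrow> 'v::ab_group_add \<Rightarrow> 'v) \<Rightarrow> ('v \<Rightarrow> 'v \<Rightarrow> 'v) \<Rightarrow> ('v \<Rightarrow> 'v) \<Rightarrow> bool" where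
  "lie_automorphism scale br \<Phi> \<longleftrightarrow>
     Vector_Spaces.linear scale scale \<Phi> \<and> bij \<Phi> \<and> (\<forall>x y. \<Phi> (br x y) = br (\<Phi> x) (\<Phi> y))"

definition local_automorphism :: "(complex \<Rightarrow> 'v::ab_group_add \<Rightarrow> 'v) \<Rightarrow> ('v \<Rightarrow> 'v \<Rightarrow> 'v) \<Rightarrow> ('v \<Rightarrow> 'v) \<Rightarrow> bool" where
  "local_automorphism scale br \<Delta> \<longleftrightarrow>
     Vector_Spaces.linear scale scale \<Delta> \<and> (\<forall>x. \<exists>\<Phi>. lie_automorphism scale br \<Phi> \<and> \<Phi> x = \<Delta> x)"

end

theory Submission
  imports Defs
begin

locale fs =
  fixes scale :: "complex \<Rightarrow> 'v::ab_group_add \<Rightarrow> 'v"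
    and br :: "'v \<Rightarrow> 'v \<Rightarrow> 'v"
    and e :: "nat \<Rightarrow> 'v"
    and n :: nat
  assumes fil: "filiform scale br n"
    and n3: "n \<ge> 3"
    and inj: "inj_on e {1..n}"
    and indep: "\<not> module.dependent scale (e ` {1..n})"
    and spans: "module.span scale (e ` {1..n}) = UNIV"
    and brk: "\<And>i. 2 \<le> i \<Longrightarrow> i \<le> n - 1 \<Longrightarrow> br (e 1) (e i) = e (i + 1)"
    and lcs_basis: "\<And>k. 1 \<le> k \<Longrightarrow> k \<le> n - 2 \<Longrightarrow>
                       \<not> module.dependent scale (e ` {k + 2..n}) \<and>
                       module.span scale (e ` {k + 2..n}) = lcs scale br k"
begin

lemma la: "lie_algebra scale br" using fil by (simp add: filiform_def)

sublocale vector_space scale using la by (simp add: lie_algebra_def)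

interpretation fd: finite_dimensional_vector_space scale "e ` {1..n}"
  by unfold_locales (use indep spans in auto)

lemma linl: "Vector_Spaces.linear scale scale (\<lambda>x. br x y)" using la by (simp add: lie_algebra_def)
lemma linr: "Vector_Spaces.linear scale scale (br x)" using la by (simp add: lie_algebra_def)

lemma br_add_l: "br (x + y) z = br x z + br y z"
  using linl[of z] unfolding Vector_Spaces.linear_iff by blast
lemma br_add_r: "br z (x + y) = br z x + br z y"
  using linr[of z] unfolding Vector_Spaces.linear_iff by blast
lemma br_scale_l: "br (scale c x) z = scale c (br x z)"
  using linl[of z] unfolding Vector_Spaces.linear_iff by blast
lemma br_scale_r: "br z (scale c x) = scale c (br z x)"
  using linr[of z] unfolding Vector_Spaces.linear_iff by blast
lemma br_self[simp]: "br x x = 0" using la by (simp add: lie_algebra_def)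
lemma jac: "br x (br y z) + br y (br z x) + br z (br x y) = 0" using la by (simp add: lie_algebra_def)
lemma br_zero_l[simp]: "br 0 z = 0" using br_add_l[of 0 0 z] by simp
lemma br_zero_r[simp]: "br z 0 = 0" using br_add_r[of z 0 0] by simp
lemma br_anti: "br x y = - br y x"
proof -
  have "br (x+y) (x+y) = br x x + br x y + (br y x + br y y)" by (simp only: br_add_l br_add_r ac_simps)
  then have "br x y + br y x = 0" by simp
  then show ?thesis by (simp add: eq_neg_iff_add_eq_0)
qed
lemma br_neg_l: "br (- x) z = - br x z"
  using br_add_l[of x "-x" z] by (simp add: add_eq_0_iff2)
lemma br_neg_r: "br z (- x) = - br z x"
  using br_add_r[of z x "-x"] by (simp add: add_eq_0_iff2)

abbreviation "B \<equiv> e ` {1..n}"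
definition c :: "nat \<Rightarrow> 'v \<Rightarrow> complex" where "c i x = representation B x (e i)"

lemma c_add: "c i (x + y) = c i x + c i y"
  unfolding c_def using representation_add[of B y x] indep spans by simp
lemma c_scale: "c i (scale a x) = a * c i x"
  unfolding c_def using representation_scale[of B x a] indep spans by simp
lemma c_neg: "c i (- x) = - c i x"
  unfolding c_def using representation_neg[of B x] indep spans by simp
lemma c_zero[simp]: "c i 0 = 0"
  unfolding c_def by (simp add: representation_zero)
lemma c_basis: "i \<in> {1..n} \<Longrightarrow> j \<in> {1..n} \<Longrightarrow> c i (e j) = (if i = j then 1 else 0)"
  unfolding c_def using representation_basis[of B "e j"] indep inj
  by (auto simp: inj_on_eq_iff)

lemma lcs_subspace: "subspace (lcs scale br k)"
  by (cases k) auto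

lemma lcs_br: "x \<in> lcs scale br k \<Longrightarrow> br x y \<in> lcs scale br (Suc k)"
  by (auto intro!: span_base)
lemma lcs_br': "x \<in> lcs scale br k \<Longrightarrow> br y x \<in> lcs scale br (Suc k)"
  using lcs_br[of x k y] br_anti[of y x] lcs_subspace[of "Suc k"]
  by (metis subspace_neg)

lemma lcs_last: "lcs scale br (n - 1) = {0}"
proof -
  have "vector_space.dim scale (lcs scale br (n-1)) = 0"
    using fil n3 unfolding filiform_def by auto
  then have "lcs scale br (n-1) \<subseteq> {0}" by simp
  moreover have "0 \<in> lcs scale br (n-1)" using lcs_subspace subspace_0 by blast
  ultimately show ?thesis by auto
qed

lemma central: "x \<in> lcs scale br (n - 2) \<Longrightarrow> br x y = 0"
  using lcs_br[of x "n-2" y] lcs_last n3 by (simp add: Suc_diff_Suc numeral_2_eq_2)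
lemma central': "x \<in> lcs scale br (n - 2) \<Longrightarrow> br y x = 0"
  using central br_anti by (metis neg_equal_0_iff_equal)

lemma en_in: "e n \<in> lcs scale br k" if "1 \<le> k" "k \<le> n - 2"
proof -
  have "e n \<in> module.span scale (e ` {k + 2..n})" using that by (intro span_base) auto
  then show ?thesis using lcs_basis[OF that] by simp
qed

lemma en_central: "br (e n) y = 0" "br y (e n) = 0"
  using central central' en_in[of "n-2"] n3 by auto

lemma u_in: "e (n - 1) \<in> lcs scale br (n - 3)"
proof (cases "n = 3")
  case True then show ?thesis by simp
next
  case False
  then have "e (n-1) \<in> module.span scale (e ` {(n-3) + 2..n})" using n3 by (intro span_base) auto
  then show ?thesis using lcs_basis[of "n-3"] n3 False by simp
qed


lemma c_vanish:
  assumes v: "v \<in> lcs scale br k" and k: "1 \<le> k" "k \<le> n - 2" and j: "1 \<le> j" "j < k + 2"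
  shows "c j v = 0"
proof -
  let ?S = "e ` {k + 2..n}"
  have S: "independent ?S" "span ?S = lcs scale br k" using lcs_basis[OF k] by auto
  have sub: "?S \<subseteq> B" using k by auto
  have "representation B v = representation ?S v"
    by (rule representation_extend) (use indep v S sub in auto)
  moreover have "e j \<notin> ?S"
  proof
    assume "e j \<in> ?S"
    then obtain m where m: "m \<in> {k+2..n}" "e j = e m" by auto
    then have "j = m" using inj j k by (intro inj_onD[OF inj]) auto
    then show False using m j by auto
  qed
  ultimately show ?thesis unfolding c_def using representation_ne_zero[of ?S v "e j"] by auto
qed

lemma c3_L2: "v \<in> lcs scale br 2 \<Longrightarrow> c 3 v = 0"
proof (cases "n = 3")
  case True
  assume "v \<in> lcs scale br 2"
  then have "v = 0" using lcs_last True by simp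
  then show ?thesis by simp
next
  case False
  assume "v \<in> lcs scale br 2"
  then show ?thesis using False n3 by (intro c_vanish[of v 2]) auto
qed

lemma c12_L1: "v \<in> lcs scale br 1 \<Longrightarrow> c 1 v = 0 \<and> c 2 v = 0"
  using n3 c_vanish[of v 1 1] c_vanish[of v 1 2] by auto

lemma c12_br: "c 1 (br y z) = 0" "c 2 (br y z) = 0"
  using c12_L1[of "br y z"] lcs_br[of y 0 z] by auto

lemma decomp: "\<exists>w \<in> lcs scale br 1. y = scale (c 1 y) (e 1) + scale (c 2 y) (e 2) + w"
proof -
  have "y = (\<Sum>b\<in>B. scale (representation B y b) b)"
    using sum_representation_eq[of B y B] indep spans by simp
  also have "\<dots> = (\<Sum>i\<in>{1..n}. scale (c i y) (e i))"
    unfolding c_def by (subst sum.reindex[OF inj]) simp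
  also have "{1..n} = insert 1 (insert 2 {3..n})" using n3 by auto
  finally have eq: "y = scale (c 1 y) (e 1) + (scale (c 2 y) (e 2) + (\<Sum>i\<in>{3..n}. scale (c i y) (e i)))"
    by simp
  have "(\<Sum>i\<in>{3..n}. scale (c i y) (e i)) \<in> span (e ` {1 + 2..n})"
    by (intro span_sum span_scale span_base) auto
  then have "(\<Sum>i\<in>{3..n}. scale (c i y) (e i)) \<in> lcs scale br 1"
    using lcs_basis[of 1] n3 by simp
  then show ?thesis using eq by (metis add.assoc)
qed

lemma br_e1_e2: "br (e 1) (e 2) = e 3" using brk[of 2] n3 by simp

lemma L2_closed: "subspace (lcs scale br 2)" by (rule lcs_subspace)

lemma br_expand:
  "br (scale a (e 1) + scale b (e 2) + w) (scale a' (e 1) + scale b' (e 2) + w') =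
   scale (a * b' - b * a') (e 3) +
      (scale a (br (e 1) w') + scale b (br (e 2) w') + br w (scale a' (e 1) + scale b' (e 2) + w'))"
proof -
  have "br (scale a (e 1) + scale b (e 2) + w) (scale a' (e 1) + scale b' (e 2) + w')
     = scale (a * b') (br (e 1) (e 2)) + scale (b * a') (br (e 2) (e 1))
      + (scale a (br (e 1) w') + scale b (br (e 2) w') + br w (scale a' (e 1) + scale b' (e 2) + w'))"
    by (simp add: br_add_l br_add_r br_scale_l br_scale_r scale_right_distrib ac_simps)
  also have "br (e 2) (e 1) = - e 3" using br_anti[of "e 2" "e 1"] br_e1_e2 by simp
  finally show ?thesis
    using br_e1_e2 by (simp add: scale_left_diff_distrib)
qed

lemma br_decomp: "\<exists>w \<in> lcs scale br 2. br y z = scale (c 1 y * c 2 z - c 2 y * c 1 z) (e 3) + w"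
proof -
  obtain w where w: "w \<in> lcs scale br 1" "y = scale (c 1 y) (e 1) + scale (c 2 y) (e 2) + w"
    using decomp by blast
  obtain w' where w': "w' \<in> lcs scale br 1" "z = scale (c 1 z) (e 1) + scale (c 2 z) (e 2) + w'"
    using decomp by blast
  let ?L = "lcs scale br 2"
  have in1: "br w x \<in> ?L" "br x w \<in> ?L" "br w' x \<in> ?L" "br x w' \<in> ?L" for x
    using lcs_br[of w 1] lcs_br'[of w 1] lcs_br[of w' 1] lcs_br'[of w' 1] w w'
    by (auto simp: numeral_2_eq_2)
  have eq: "br y z = scale (c 1 y * c 2 z - c 2 y * c 1 z) (e 3) +
      (scale (c 1 y) (br (e 1) w') + scale (c 2 y) (br (e 2) w') + br w z)"
    using br_expand[of "c 1 y" "c 2 y" w "c 1 z" "c 2 z" w'] w(2) w'(2) by metis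
  have "scale (c 1 y) (br (e 1) w') + scale (c 2 y) (br (e 2) w') + br w z \<in> ?L"
    using in1 L2_closed by (intro subspace_add subspace_scale) auto
  then show ?thesis using eq by blast
qed

lemma c3_br: "c 3 (br y z) = c 1 y * c 2 z - c 2 y * c 1 z"
proof -
  obtain w where "w \<in> lcs scale br 2" "br y z = scale (c 1 y * c 2 z - c 2 y * c 1 z) (e 3) + w"
    using br_decomp by blast
  then show ?thesis using c3_L2 c_basis[of 3 3] n3 by (simp add: c_add c_scale)
qed

abbreviation "u \<equiv> e (n - 1)"

lemma u_L1: "w \<in> lcs scale br 1 \<Longrightarrow> br u w = 0"
proof -
  assume "w \<in> lcs scale br 1"
  then have "w \<in> span {br x y | x y. x \<in> lcs scale br 0}" by simp
  then show ?thesis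
  proof (induction rule: span_induct)
    case base
    show ?case unfolding subspace_def by (simp add: br_add_r br_scale_r)
  next
    case (step x)
    then obtain a b where x: "x = br a b" by auto
    have cen: "br u b \<in> lcs scale br (n-2)" "br u a \<in> lcs scale br (n-2)"
      using lcs_br[OF u_in] n3 by (metis Suc_diff_Suc le_trans numeral_3_eq_3 numeral_2_eq_2 less_Suc_eq_le diff_Suc_Suc)+
    have "br u (br a b) + br a (br b u) + br b (br u a) = 0" by (rule jac)
    moreover have "br b u = - br u b" by (rule br_anti)
    ultimately show ?case using x central'[OF cen(1)] central'[OF cen(2)] by (simp add: br_neg_r)
  qed
qed

lemma c_en: "c 1 (e n) = 0" "c 2 (e n) = 0" "c 3 (e n) = (if n = 3 then 1 else 0)"
  using c_basis[of 1 n] c_basis[of 2 n] c_basis[of 3 n] n3 by auto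
lemma c2_u: "c 2 u = (if n = 3 then 1 else 0)"
  using c_basis[of 2 "n-1"] n3 by auto

lemma br_u: "br u z = scale (- c 1 z) (e n) + scale (c 2 z) (br u (e 2))"
proof -
  obtain w where w: "w \<in> lcs scale br 1" "z = scale (c 1 z) (e 1) + scale (c 2 z) (e 2) + w"
    using decomp by blast
  have "br (e 1) u = e n" using brk[of "n-1"] n3 by simp
  then have "br u (e 1) = - e n" using br_anti by metis
  moreover have "br u z = scale (c 1 z) (br u (e 1)) + scale (c 2 z) (br u (e 2)) + br u w"
    by (subst w(2)) (simp add: br_add_r br_scale_r)
  ultimately show ?thesis using u_L1[OF w(1)] by (simp add: scale_minus_left scale_minus_right)
qed

lemma bij_lin:
  assumes l: "Vector_Spaces.linear scale scale h" and z: "\<And>y. h y = 0 \<Longrightarrow> y = 0"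
  shows "bij h"
proof -
  have add: "h (x + y) = h x + h y" for x y using l unfolding Vector_Spaces.linear_iff by blast
  have "inj h"
  proof (rule injI)
    fix x y assume "h x = h y"
    moreover have "h x = h (x - y) + h y" using add[of "x - y" y] by simp
    ultimately have "h (x - y) = 0" by simp
    then have "x - y = 0" using z by blast
    then show "x = y" by simp
  qed
  moreover have "surj h" by (rule fd.linear_inj_imp_surj[OF l \<open>inj h\<close>])
  ultimately show ?thesis by (simp add: bij_def)
qed

definition Phi :: "complex \<Rightarrow> complex \<Rightarrow> 'v \<Rightarrow> 'v" where
  "Phi a b y = y + scale (a * c 1 y + b * c 2 y) (e n)"
definition Psi :: "'v \<Rightarrow> 'v" where
  "Psi y = y + scale (c 2 y) u + scale (c 3 y) (e n)"

lemma Phi_aut: "lie_automorphism scale br (Phi a b)"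
proof -
  have lin: "Vector_Spaces.linear scale scale (Phi a b)"
    unfolding Vector_Spaces.linear_iff Phi_def
    by (auto simp: c_add c_scale scale_right_distrib scale_left_distrib algebra_simps vector_space_axioms)
  have "bij (Phi a b)"
  proof (rule bij_lin[OF lin])
    fix y assume h: "Phi a b y = 0"
    have "c 1 (Phi a b y) = c 1 y" "c 2 (Phi a b y) = c 2 y"
      unfolding Phi_def using c_en by (simp_all add: c_add c_scale)
    then have "c 1 y = 0" "c 2 y = 0" using h by simp_all
    then show "y = 0" using h by (simp add: Phi_def)
  qed
  moreover have "Phi a b (br x y) = br (Phi a b x) (Phi a b y)" for x y
    unfolding Phi_def using c12_br[of x y] by (simp add: br_add_l br_add_r br_scale_l br_scale_r en_central)
  ultimately show ?thesis using lin by (simp add: lie_automorphism_def)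
qed

lemma Psi_aut: "lie_automorphism scale br Psi"
proof -
  have lin: "Vector_Spaces.linear scale scale Psi"
    unfolding Vector_Spaces.linear_iff Psi_def
    by (auto simp: c_add c_scale scale_right_distrib scale_left_distrib algebra_simps vector_space_axioms)
  have "bij Psi"
  proof (rule bij_lin[OF lin])
    fix y assume h: "Psi y = 0"
    have "c 2 (Psi y) = c 2 y * (1 + c 2 u)"
      unfolding Psi_def by (simp add: c_add c_scale c_en algebra_simps)
    then have "c 2 y = 0" using h c2_u by (auto split: if_splits)
    then have h2: "y + scale (c 3 y) (e n) = 0" using h by (simp add: Psi_def)
    have "c 3 (y + scale (c 3 y) (e n)) = c 3 y * (1 + c 3 (e n))"
      by (simp add: c_add c_scale algebra_simps)
    then have "c 3 y = 0" using h2 c_en(3) by (auto split: if_splits)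
    then show "y = 0" using h2 by simp
  qed
  moreover have "Psi (br y z) = br (Psi y) (Psi z)" for y z
  proof -
    have l: "Psi (br y z) = br y z + scale (c 1 y * c 2 z - c 2 y * c 1 z) (e n)"
      unfolding Psi_def by (simp add: c12_br c3_br)
    have "br (Psi y) (Psi z) = br y z + scale (c 2 z) (br y u) + scale (c 2 y) (br u z)
        + scale (c 2 y * c 2 z) (br u u)"
      unfolding Psi_def by (simp add: br_add_l br_add_r br_scale_l br_scale_r en_central scale_scale ac_simps)
    also have "br y u = - br u y" by (rule br_anti)
    finally have "br (Psi y) (Psi z) = br y z + scale (c 2 z) (- (scale (- c 1 y) (e n) + scale (c 2 y) (br u (e 2))))
       + scale (c 2 y) (scale (- c 1 z) (e n) + scale (c 2 z) (br u (e 2)))"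
      using br_u[of y] br_u[of z] by (simp add: scale_right_diff_distrib scale_right_distrib)
    also have "\<dots> = br y z + scale (c 1 y * c 2 z - c 2 y * c 1 z) (e n)"
      by (simp add: scale_right_distrib scale_left_diff_distrib scale_minus_left scale_minus_right scale_scale algebra_simps)
    finally show ?thesis using l by simp
  qed
  ultimately show ?thesis using lin by (simp add: lie_automorphism_def)
qed

lemma main: "local_automorphism scale br (\<lambda>x. x + scale (representation B x (e 3)) (e n))
    \<and> \<not> lie_automorphism scale br (\<lambda>x. x + scale (representation B x (e 3)) (e n))"
proof -
  define D where "D = (\<lambda>x. x + scale (c 3 x) (e n))"
  have Deq: "(\<lambda>x. x + scale (representation B x (e 3)) (e n)) = D"
    unfolding D_def c_def by simp
  have lin: "Vector_Spaces.linear scale scale D"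
    unfolding Vector_Spaces.linear_iff D_def
    by (auto simp: c_add c_scale scale_right_distrib scale_left_distrib algebra_simps vector_space_axioms)
  have loc: "\<exists>\<Phi>. lie_automorphism scale br \<Phi> \<and> \<Phi> x = D x" for x
  proof (cases "c 1 x \<noteq> 0")
    case True
    show ?thesis
      by (rule exI[of _ "Phi (c 3 x / c 1 x) 0"]) (use True Phi_aut in \<open>simp add: Phi_def D_def\<close>)
  next
    case F1: False
    show ?thesis
    proof (cases "c 2 x \<noteq> 0")
      case True
      show ?thesis
        by (rule exI[of _ "Phi 0 (c 3 x / c 2 x)"]) (use True Phi_aut in \<open>simp add: Phi_def D_def\<close>)
    next
      case False
      show ?thesis
        by (rule exI[of _ Psi]) (use False Psi_aut in \<open>simp add: Psi_def D_def\<close>)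
    qed
  qed
  have nz: "e n \<noteq> 0"
  proof
    assume "e n = 0"
    then have "0 \<in> B" using n3 by force
    then show False using indep dependent_zero by blast
  qed
  have "\<not> lie_automorphism scale br D"
  proof
    assume "lie_automorphism scale br D"
    then have h: "D (br (e 1) (e 2)) = br (D (e 1)) (D (e 2))" by (simp add: lie_automorphism_def)
    have "D (e 1) = e 1" "D (e 2) = e 2" "D (e 3) = e 3 + e n"
      unfolding D_def using c_basis[of 3 1] c_basis[of 3 2] c_basis[of 3 3] n3 by auto
    then show False using h br_e1_e2 nz by simp
  qed
  then show ?thesis using lin loc Deq by (simp add: local_automorphism_def)
qed
end

theorem lemma4p3:
  fixes scale :: "complex \<Rightarrow> 'v::ab_group_add \<Rightarrow> 'v"
    and br :: "'v \<Rightarrow> 'v \<Rightarrow> 'v"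
    and e :: "nat \<Rightarrow> 'v"
    and n :: nat
  assumes fil: "filiform scale br n"
    and n3: "n \<ge> 3"
    and inj: "inj_on e {1..n}"
    and indep: "\<not> module.dependent scale (e ` {1..n})"
    and spans: "module.span scale (e ` {1..n}) = UNIV"
    and brk: "\<And>i. 2 \<le> i \<Longrightarrow> i \<le> n - 1 \<Longrightarrow> br (e 1) (e i) = e (i + 1)"
    and lcs_basis: "\<And>k. 1 \<le> k \<Longrightarrow> k \<le> n - 2 \<Longrightarrow>
                       \<not> module.dependent scale (e ` {k + 2..n}) \<and>
                       module.span scale (e ` {k + 2..n}) = lcs scale br k"
  shows "local_automorphism scale br
           (\<lambda>x. x + scale (module.representation scale (e ` {1..n}) x (e 3)) (e n))
         \<and> \<not> lie_automorphism scale br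
           (\<lambda>x. x + scale (module.representation scale (e ` {1..n}) x (e 3)) (e n))"
  proof -
  interpret fs scale br e n using assms by (unfold_locales) auto
  show ?thesis by (rule main)
qed

end
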